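(* Let $S\subseteq\mathbb{N}^{\mathbb{N}}$ and let $n>0$ be an integer. Then $S$ is $\mathbf{\Sigma}^0_n$ (respectively $\mathbf{\Pi}^0_n$, $\mathbf{\Delta}^0_n$) if and only if there is a $\Sigma_n$ (respectively $\Pi_n$, $\Delta_n$) sentence $\phi$ of $\mathscr{L}_{\max}$ with $S=\{f\in\mathbb{N}^{\mathbb{N}}:\mathscr{M}_f\models\phi\}$.
   Context: Baire space $\mathbb{N}^{\mathbb{N}}$ carries the product of discrete topologies; $\mathbf{\Sigma}^0_n,\mathbf{\Pi}^0_n,\mathbf{\Delta}^0_n$ are the boldface Borel pointclasses. The language $\mathscr{L}_{\max}$ is the first-order language (with equality) having: a constant symbol $\overline{n}$ for each $n\in\mathbb{N}$; an $n$-ary function symbol $\tilde w$ for each $w:\mathbb{N}^n\to\mathbb{N}$; an $n$-ary predicate symbol $\tilde p$ for each $p\subseteq\mathbb{N}^n$; a special unary function symbol $\mathbf{f}$; and, for every $n$ and every $G:\mathbb{N}^n\times\mathbb{N}^{<\mathbb{N}}\to\mathbb{N}$, an $(n+1)$-ary function symbol $G\circ\mathbf{f}$. For $f\in\mathbb{N}^{\mathbb{N}}$, $\mathscr{M}_f$ is the structure with universe $\mathbb{N}$ interpreting $\overline n$ as $n$, $\tilde w$ as $w$, $\tilde p$ as $p$, $\mathbf f$ as $f$, and $G\circ\mathbf f$ as $(m_1,\dots,m_n,m)\mapsto G(m_1,\dots,m_n,f(0),\dots,f(m))$. Formula classes: "quantifier-free" means containing no quantifiers at all (not even bounded ones). $\Sigma_0=\Pi_0=\Delta_0$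 is the set of quantifier-free formulas; $\Sigma_{n+1}=\{\exists x\,\phi:\phi\in\Pi_n\}$ and $\Pi_{n+1}=\{\forall x\,\phi:\phi\in\Sigma_n\}$; a formula is $\Delta_{n+1}$ if it is equivalent, in every structure $\mathscr{M}_f$ ($f\in\mathbb{N}^{\mathbb{N}}$), to some $\Sigma_{n+1}$ formula of $\mathscr{L}_{\max}$ and also to some $\Pi_{n+1}$ formula of $\mathscr{L}_{\max}$. *)

theory Defs
  imports "HOL-Analysis.Analysis"
begin

text \<open>Baire space is nat \<Rightarrow> nat with the product topology (library instance of
the function space topology; nat carries its discrete metric topology).
Only indices n > 0 are meaningful; bSigma 0 is set to the empty class.\<close>

fun bSigma :: "nat \<Rightarrow> (nat \<Rightarrow> nat) set set" where
  "bSigma 0 = {}"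
| "bSigma (Suc 0) = {S. open S}"
| "bSigma (Suc (Suc n)) =
     {S. \<exists>A :: nat \<Rightarrow> (nat \<Rightarrow> nat) set. (\<forall>i. - A i \<in> bSigma (Suc n)) \<and> S = (\<Union>i. A i)}"

definition bPi :: "nat \<Rightarrow> (nat \<Rightarrow> nat) set set" where
  "bPi n = {S. - S \<in> bSigma n}"

definition bDelta :: "nat \<Rightarrow> (nat \<Rightarrow> nat) set set" where
  "bDelta n = bSigma n \<inter> bPi n"

text \<open>An n-ary function symbol w : N^n \<rightarrow> N is given by a function on
argument lists; similarly predicate symbols p \<subseteq> N^n are sets of argument lists,
and the symbols G o f take G : N^n \<times> N^{<N} \<rightarrow> N as a function of the list of
the first n arguments and a finite sequence.\<close>

datatype trm =
    Var nat
  | Cst nat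
  | Fn "nat list \<Rightarrow> nat" "trm list"
  | FF trm
  | GF "nat list \<Rightarrow> nat list \<Rightarrow> nat" "trm list" trm

datatype fm =
    Eq trm trm
  | Pr "nat list set" "trm list"
  | Neg fm
  | Conj fm fm
  | Disj fm fm
  | Imp fm fm
  | FEx nat fm
  | FAll nat fm

fun teval :: "(nat \<Rightarrow> nat) \<Rightarrow> (nat \<Rightarrow> nat) \<Rightarrow> trm \<Rightarrow> nat" where
  "teval f e (Var x) = e x"
| "teval f e (Cst n) = n"
| "teval f e (Fn w ts) = w (map (teval f e) ts)"
| "teval f e (FF t) = f (teval f e t)"
| "teval f e (GF G ts t) = G (map (teval f e) ts) (map f [0..<Suc (teval f e t)])"

fun sat :: "(nat \<Rightarrow> nat) \<Rightarrow> (nat \<Rightarrow> nat) \<Rightarrow> fm \<Rightarrow> bool" where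
  "sat f e (Eq s t) = (teval f e s = teval f e t)"
| "sat f e (Pr p ts) = (map (teval f e) ts \<in> p)"
| "sat f e (Neg \<phi>) = (\<not> sat f e \<phi>)"
| "sat f e (Conj \<phi> \<psi>) = (sat f e \<phi> \<and> sat f e \<psi>)"
| "sat f e (Disj \<phi> \<psi>) = (sat f e \<phi> \<or> sat f e \<psi>)"
| "sat f e (Imp \<phi> \<psi>) = (sat f e \<phi> \<longrightarrow> sat f e \<psi>)"
| "sat f e (FEx x \<phi>) = (\<exists>n. sat f (e(x := n)) \<phi>)"
| "sat f e (FAll x \<phi>) = (\<forall>n. sat f (e(x := n)) \<phi>)"

fun tvars :: "trm \<Rightarrow> nat set" where
  "tvars (Var x) = {x}"
| "tvars (Cst n) = {}"
| "tvars (Fn w ts) = \<Union> (set (map tvars ts))"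
| "tvars (FF t) = tvars t"
| "tvars (GF G ts t) = \<Union> (set (map tvars ts)) \<union> tvars t"

fun freevars :: "fm \<Rightarrow> nat set" where
  "freevars (Eq s t) = tvars s \<union> tvars t"
| "freevars (Pr p ts) = \<Union> (set (map tvars ts))"
| "freevars (Neg \<phi>) = freevars \<phi>"
| "freevars (Conj \<phi> \<psi>) = freevars \<phi> \<union> freevars \<psi>"
| "freevars (Disj \<phi> \<psi>) = freevars \<phi> \<union> freevars \<psi>"
| "freevars (Imp \<phi> \<psi>) = freevars \<phi> \<union> freevars \<psi>"
| "freevars (FEx x \<phi>) = freevars \<phi> - {x}"
| "freevars (FAll x \<phi>) = freevars \<phi> - {x}"

definition sentence :: "fm \<Rightarrow> bool" where
  "sentence \<phi> = (freevars \<phi> = {})"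

text \<open>M_f \<Turnstile> \<phi> (for sentences the assignment is irrelevant).\<close>
definition models :: "(nat \<Rightarrow> nat) \<Rightarrow> fm \<Rightarrow> bool" where
  "models f \<phi> = (\<forall>e. sat f e \<phi>)"

fun qfree :: "fm \<Rightarrow> bool" where
  "qfree (Eq s t) = True"
| "qfree (Pr p ts) = True"
| "qfree (Neg \<phi>) = qfree \<phi>"
| "qfree (Conj \<phi> \<psi>) = (qfree \<phi> \<and> qfree \<psi>)"
| "qfree (Disj \<phi> \<psi>) = (qfree \<phi> \<and> qfree \<psi>)"
| "qfree (Imp \<phi> \<psi>) = (qfree \<phi> \<and> qfree \<psi>)"
| "qfree (FEx x \<phi>) = False"
| "qfree (FAll x \<phi>) = False"

fun isSigma :: "nat \<Rightarrow> fm \<Rightarrow> bool" and isPi :: "nat \<Rightarrow> fm \<Rightarrow> bool" where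
  "isSigma 0 \<phi> = qfree \<phi>"
| "isPi 0 \<phi> = qfree \<phi>"
| "isSigma (Suc n) \<phi> = (\<exists>x \<psi>. \<phi> = FEx x \<psi> \<and> isPi n \<psi>)"
| "isPi (Suc n) \<phi> = (\<exists>x \<psi>. \<phi> = FAll x \<psi> \<and> isSigma n \<psi>)"

definition equivalent :: "fm \<Rightarrow> fm \<Rightarrow> bool" where
  "equivalent \<phi> \<psi> = (\<forall>f e. sat f e \<phi> = sat f e \<psi>)"

fun isDelta :: "nat \<Rightarrow> fm \<Rightarrow> bool" where
  "isDelta 0 \<phi> = qfree \<phi>"
| "isDelta (Suc n) \<phi> =
     ((\<exists>\<psi>. isSigma (Suc n) \<psi> \<and> equivalent \<phi> \<psi>) \<and> (\<exists>\<psi>. isPi (Suc n) \<psi> \<and> equivalent \<phi> \<psi>))"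

end

theory Submission imports Defs begin


definition loc :: "(nat \<Rightarrow> nat) set \<Rightarrow> bool" where
  "loc U = (\<forall>f\<in>U. \<exists>N. \<forall>g. (\<forall>i<N. g i = f i) \<longrightarrow> g \<in> U)"

lemma open_loc: "open U \<longleftrightarrow> loc (U :: (nat \<Rightarrow> nat) set)"
proof
  assume "open U"
  hence o: "openin (product_topology (\<lambda>i. euclidean) UNIV) U" by (simp add: open_fun_def)
  show "loc U" unfolding loc_def
  proof
    fix f assume "f \<in> U"
    then obtain X where fin: "finite {i. X i \<noteq> (UNIV::nat set)}" and fx: "f \<in> Pi\<^sub>E UNIV X"
      and sub: "Pi\<^sub>E UNIV X \<subseteq> U"
      using o unfolding openin_product_topology_alt by auto
    obtain N where N: "\<forall>i\<in>{i. X i \<noteq> UNIV}. i < N"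
      using fin finite_nat_set_iff_bounded by blast
    show "\<exists>N. \<forall>g. (\<forall>i<N. g i = f i) \<longrightarrow> g \<in> U"
    proof (intro exI allI impI)
      fix g assume g: "\<forall>i<N. g i = f i"
      have "g \<in> Pi\<^sub>E UNIV X"
      proof (auto simp: PiE_def Pi_def)
        fix i show "g i \<in> X i"
        proof (cases "X i = UNIV")
          case False thus ?thesis using N g fx by (auto simp: PiE_def Pi_def)
        qed simp
      qed
      thus "g \<in> U" using sub by auto
    qed
  qed
next
  assume l: "loc U"
  show "open U" unfolding open_fun_def openin_product_topology_alt
  proof
    fix f assume "f \<in> U"
    then obtain N where N: "\<forall>g. (\<forall>i<N. g i = f i) \<longrightarrow> g \<in> U" using l loc_def by blast
    define X where "X i = (if i < N then {f i} else UNIV)" for i :: nat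
    have "{i. X i \<noteq> UNIV} \<subseteq> {..<N}" by (auto simp: X_def)
    hence "finite {i \<in> UNIV. X i \<noteq> topspace euclidean}" using finite_subset by auto
    moreover have "f \<in> Pi\<^sub>E UNIV X" by (auto simp: X_def)
    moreover have "Pi\<^sub>E UNIV X \<subseteq> U"
    proof
      fix g assume "g \<in> Pi\<^sub>E UNIV X"
      hence "\<forall>i<N. g i = f i" by (auto simp: X_def PiE_def Pi_def) (metis singletonD)
      thus "g \<in> U" using N by blast
    qed
    ultimately show "\<exists>X. finite {i \<in> UNIV. X i \<noteq> topspace euclidean} \<and>
      (\<forall>i\<in>UNIV. openin euclidean (X i)) \<and> f \<in> Pi\<^sub>E UNIV X \<and> Pi\<^sub>E UNIV X \<subseteq> U"
      by (auto intro!: exI[of _ X] simp: open_discrete)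
  qed
qed


definition agreeN :: "nat \<Rightarrow> (nat \<Rightarrow> nat) \<Rightarrow> (nat \<Rightarrow> nat) \<Rightarrow> bool" where
  "agreeN N g f = (\<forall>i<N. g i = f i)"

lemma agreeN_mono: "agreeN N g f \<Longrightarrow> M \<le> N \<Longrightarrow> agreeN M g f"
  by (auto simp: agreeN_def)

lemma list_bound:
  assumes "\<forall>t\<in>set ts. \<exists>N. \<forall>g. agreeN N g f \<longrightarrow> P g t"
  shows "\<exists>N. \<forall>g. agreeN N g f \<longrightarrow> (\<forall>t\<in>set ts. P g t)"
  using assms
proof (induction ts)
  case Nil thus ?case by auto
next
  case (Cons a ts)
  then obtain N1 where N1: "\<forall>g. agreeN N1 g f \<longrightarrow> P g a" by auto
  from Cons obtain N2 where N2: "\<forall>g. agreeN N2 g f \<longrightarrow> (\<forall>t\<in>set ts. P g t)" by auto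
  show ?case
  proof (intro exI[of _ "max N1 N2"] allI impI)
    fix g assume a: "agreeN (max N1 N2) g f"
    have "P g a" using N1 a agreeN_mono by (meson max.cobounded1)
    moreover have "\<forall>t\<in>set ts. P g t" using N2 a agreeN_mono by (meson max.cobounded2)
    ultimately show "\<forall>t\<in>set (a # ts). P g t" by simp
  qed
qed

lemma teval_loc: "\<exists>N. \<forall>g. agreeN N g f \<longrightarrow> teval g e t = teval f e t"
proof (induction t)
  case (Fn w ts)
  then obtain N where N: "\<forall>g. agreeN N g f \<longrightarrow> (\<forall>t\<in>set ts. teval g e t = teval f e t)"
    using list_bound[of ts f "\<lambda>g t. teval g e t = teval f e t"] by auto
  show ?case
  proof (intro exI[of _ N] allI impI)
    fix g assume "agreeN N g f"
    hence "\<forall>t\<in>set ts. teval g e t = teval f e t" using N by blast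
    hence "map (teval g e) ts = map (teval f e) ts" by (simp add: map_eq_conv)
    thus "teval g e (Fn w ts) = teval f e (Fn w ts)" by (simp del: map_eq_conv)
  qed
next
  case (FF t)
  then obtain N where N: "\<forall>g. agreeN N g f \<longrightarrow> teval g e t = teval f e t" by auto
  show ?case
  proof (intro exI[of _ "max N (Suc (teval f e t))"] allI impI)
    fix g assume a: "agreeN (max N (Suc (teval f e t))) g f"
    hence "teval g e t = teval f e t" using N agreeN_mono by (meson max.cobounded1)
    moreover have "g (teval f e t) = f (teval f e t)" using a by (auto simp: agreeN_def)
    ultimately show "teval g e (FF t) = teval f e (FF t)" by simp
  qed
next
  case (GF G ts t)
  then obtain N where N: "\<forall>g. agreeN N g f \<longrightarrow> teval g e t = teval f e t" by auto
  obtain M where M: "\<forall>g. agreeN M g f \<longrightarrow> (\<forall>t\<in>set ts. teval g e t = teval f e t)"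
    using GF list_bound[of ts f "\<lambda>g t. teval g e t = teval f e t"] by auto
  show ?case
  proof (intro exI[of _ "max (max N M) (Suc (teval f e t))"] allI impI)
    fix g assume a: "agreeN (max (max N M) (Suc (teval f e t))) g f"
    hence 1: "teval g e t = teval f e t" using N agreeN_mono by (meson max.cobounded1 le_trans)
    have "agreeN M g f" using a agreeN_mono by (meson max.cobounded1 max.cobounded2 le_trans)
    hence "\<forall>t\<in>set ts. teval g e t = teval f e t" using M by blast
    hence 2: "map (teval g e) ts = map (teval f e) ts" by (simp add: map_eq_conv)
    have 3: "map g [0..<Suc (teval f e t)] = map f [0..<Suc (teval f e t)]"
      using a by (auto simp: agreeN_def)
    show "teval g e (GF G ts t) = teval f e (GF G ts t)" using 1 2 3 by (simp only: teval.simps)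
  qed
qed auto

lemma qfree_loc: "qfree \<phi> \<Longrightarrow> \<exists>N. \<forall>g. agreeN N g f \<longrightarrow> sat g e \<phi> = sat f e \<phi>"
proof (induction \<phi>)
  case (Eq s t)
  obtain N1 where N1: "\<forall>g. agreeN N1 g f \<longrightarrow> teval g e s = teval f e s" using teval_loc by blast
  obtain N2 where N2: "\<forall>g. agreeN N2 g f \<longrightarrow> teval g e t = teval f e t" using teval_loc by blast
  show ?case
    by (rule exI[of _ "max N1 N2"]) (metis N1 N2 agreeN_mono max.cobounded1 max.cobounded2 sat.simps(1))
next
  case (Pr p ts)
  obtain N where N: "\<forall>g. agreeN N g f \<longrightarrow> (\<forall>t\<in>set ts. teval g e t = teval f e t)"
    using list_bound[of ts f "\<lambda>g t. teval g e t = teval f e t"] teval_loc by blast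
  show ?case
  proof (intro exI[of _ N] allI impI)
    fix g assume "agreeN N g f"
    hence "\<forall>t\<in>set ts. teval g e t = teval f e t" using N by blast
    hence "map (teval g e) ts = map (teval f e) ts" by (simp add: map_eq_conv)
    thus "sat g e (Pr p ts) = sat f e (Pr p ts)" by (simp del: map_eq_conv)
  qed
next
  case (Neg \<phi>) thus ?case by auto
next
  case (Conj \<phi>1 \<phi>2)
  then obtain N1 N2 where "\<forall>g. agreeN N1 g f \<longrightarrow> sat g e \<phi>1 = sat f e \<phi>1"
    "\<forall>g. agreeN N2 g f \<longrightarrow> sat g e \<phi>2 = sat f e \<phi>2" by auto
  thus ?case by (intro exI[of _ "max N1 N2"]) (metis agreeN_mono max.cobounded1 max.cobounded2 sat.simps(4))
next
  case (Disj \<phi>1 \<phi>2)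
  then obtain N1 N2 where "\<forall>g. agreeN N1 g f \<longrightarrow> sat g e \<phi>1 = sat f e \<phi>1"
    "\<forall>g. agreeN N2 g f \<longrightarrow> sat g e \<phi>2 = sat f e \<phi>2" by auto
  thus ?case by (intro exI[of _ "max N1 N2"]) (metis agreeN_mono max.cobounded1 max.cobounded2 sat.simps(5))
next
  case (Imp \<phi>1 \<phi>2)
  then obtain N1 N2 where "\<forall>g. agreeN N1 g f \<longrightarrow> sat g e \<phi>1 = sat f e \<phi>1"
    "\<forall>g. agreeN N2 g f \<longrightarrow> sat g e \<phi>2 = sat f e \<phi>2" by auto
  thus ?case by (intro exI[of _ "max N1 N2"]) (metis agreeN_mono max.cobounded1 max.cobounded2 sat.simps(6))
qed auto

lemma teval_vars: "\<forall>x\<in>tvars t. e x = e' x \<Longrightarrow> teval f e t = teval f e' t"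
proof (induction t)
  case (Fn w ts)
  hence "\<forall>t\<in>set ts. teval f e t = teval f e' t" by simp
  hence "map (teval f e) ts = map (teval f e') ts" by (simp add: map_eq_conv)
  thus ?case by (simp del: map_eq_conv)
next
  case (GF G ts t)
  hence "\<forall>t\<in>set ts. teval f e t = teval f e' t" by fastforce
  hence "map (teval f e) ts = map (teval f e') ts" by (simp add: map_eq_conv)
  moreover have "teval f e t = teval f e' t" using GF by simp
  ultimately show ?case by (simp del: map_eq_conv)
qed auto

lemma sat_vars: "\<forall>x\<in>freevars \<phi>. e x = e' x \<Longrightarrow> sat f e \<phi> = sat f e' \<phi>"
proof (induction \<phi> arbitrary: e e')
  case (Eq s t) thus ?case using teval_vars[of s e e' f] teval_vars[of t e e' f] by auto
next
  case (Pr p ts)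
  hence "\<forall>t\<in>set ts. teval f e t = teval f e' t" using teval_vars by simp
  hence "map (teval f e) ts = map (teval f e') ts" by (simp add: map_eq_conv)
  thus ?case by (simp del: map_eq_conv)
next
  case (FEx x \<phi>)
  hence "\<And>n. sat f (e(x:=n)) \<phi> = sat f (e'(x:=n)) \<phi>" by auto
  thus ?case by simp
next
  case (FAll x \<phi>)
  hence "\<And>n. sat f (e(x:=n)) \<phi> = sat f (e'(x:=n)) \<phi>" by auto
  thus ?case by simp
next
  case (Neg a) thus ?case by simp
next
  case (Conj a b)
  hence "sat f e a = sat f e' a" "sat f e b = sat f e' b" by auto
  thus ?case by simp
next
  case (Disj a b)
  hence "sat f e a = sat f e' a" "sat f e b = sat f e' b" by auto
  thus ?case by simp
next
  case (Imp a b)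
  hence "sat f e a = sat f e' a" "sat f e b = sat f e' b" by auto
  thus ?case by simp
qed

lemma models_sentence: "sentence \<phi> \<Longrightarrow> models f \<phi> = sat f (\<lambda>_. 0) \<phi>"
  unfolding models_def sentence_def using sat_vars[of \<phi>] by auto

lemma B: "(isSigma (Suc n) \<phi> \<longrightarrow> {f. sat f e \<phi>} \<in> bSigma (Suc n)) \<and>
          (isPi (Suc n) \<phi> \<longrightarrow> - {f. sat f e \<phi>} \<in> bSigma (Suc n))"
proof (induction n arbitrary: \<phi> e)
  case 0
  have l: "loc {f. \<exists>k. sat f (e(x:=k)) \<psi> = b}" if q: "qfree \<psi>" for x \<psi> b e
    unfolding loc_def
  proof
    fix f assume "f \<in> {f. \<exists>k. sat f (e(x:=k)) \<psi> = b}"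
    then obtain k where k: "sat f (e(x:=k)) \<psi> = b" by auto
    obtain N where "\<forall>g. agreeN N g f \<longrightarrow> sat g (e(x:=k)) \<psi> = sat f (e(x:=k)) \<psi>"
      using qfree_loc[OF q] by blast
    thus "\<exists>N. \<forall>g. (\<forall>i<N. g i = f i) \<longrightarrow> g \<in> {f. \<exists>k. sat f (e(x:=k)) \<psi> = b}"
      using k by (auto simp: agreeN_def)
  qed
  show ?case
  proof (intro conjI impI)
    assume "isSigma (Suc 0) \<phi>"
    then obtain x \<psi> where "\<phi> = FEx x \<psi>" "qfree \<psi>" by auto
    thus "{f. sat f e \<phi>} \<in> bSigma (Suc 0)" using l[of \<psi> e x True] by (simp add: open_loc)
  next
    assume "isPi (Suc 0) \<phi>"
    then obtain x \<psi> where "\<phi> = FAll x \<psi>" "qfree \<psi>" by auto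
    moreover have "- {f. \<forall>k. sat f (e(x:=k)) \<psi>} = {f. \<exists>k. sat f (e(x:=k)) \<psi> = False}" by auto
    ultimately show "- {f. sat f e \<phi>} \<in> bSigma (Suc 0)" using l[of \<psi> e x False] by (simp add: open_loc)
  qed
next
  case (Suc n)
  show ?case
  proof (intro conjI impI)
    assume "isSigma (Suc (Suc n)) \<phi>"
    then obtain x \<psi> where p: "\<phi> = FEx x \<psi>" "isPi (Suc n) \<psi>" by auto
    let ?A = "\<lambda>k. {f. sat f (e(x:=k)) \<psi>}"
    have "\<forall>i. - ?A i \<in> bSigma (Suc n)" using Suc p by blast
    moreover have "{f. sat f e \<phi>} = (\<Union>i. ?A i)" using p by auto
    ultimately show "{f. sat f e \<phi>} \<in> bSigma (Suc (Suc n))" by auto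
  next
    assume "isPi (Suc (Suc n)) \<phi>"
    then obtain x \<psi> where p: "\<phi> = FAll x \<psi>" "isSigma (Suc n) \<psi>" by auto
    let ?A = "\<lambda>k. - {f. sat f (e(x:=k)) \<psi>}"
    have "\<forall>i. - ?A i \<in> bSigma (Suc n)" using Suc p by simp
    moreover have "- {f. sat f e \<phi>} = (\<Union>i. ?A i)" using p by auto
    ultimately show "- {f. sat f e \<phi>} \<in> bSigma (Suc (Suc n))" by (simp only: bSigma.simps mem_Collect_eq) (rule exI[of _ "?A"], auto)
  qed
qed


definition lastv :: "nat list \<Rightarrow> nat" where
  "lastv xs = (if xs = [] then 0 else hd xs)"

fun QS :: "nat \<Rightarrow> bool \<Rightarrow> (nat list \<Rightarrow> nat list \<Rightarrow> bool) \<Rightarrow> nat list \<Rightarrow> (nat \<Rightarrow> nat) \<Rightarrow> bool" where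
  "QS 0 b R xs f = R xs (map f [0..<Suc (lastv xs)])"
| "QS (Suc n) b R xs f = (if b then (\<exists>k. QS n False R (k # xs) f) else (\<forall>k. QS n True R (k # xs) f))"

fun FQ :: "nat \<Rightarrow> bool \<Rightarrow> (nat list \<Rightarrow> nat list \<Rightarrow> bool) \<Rightarrow> nat \<Rightarrow> fm" where
  "FQ 0 b R d = Eq (GF (\<lambda>xs s. if R xs s then 1 else 0) (map Var (rev [0..<d]))
                     (if d = 0 then Cst 0 else Var (d - 1))) (Cst 1)"
| "FQ (Suc n) b R d = (if b then FEx d (FQ n False R (Suc d)) else FAll d (FQ n True R (Suc d)))"

lemma sat_FQ: "sat f e (FQ n b R d) = QS n b R (map e (rev [0..<d])) f"
proof (induction n arbitrary: b d e)
  case 0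
  have "teval f e (if d = 0 then Cst 0 else Var (d - 1)) = lastv (map e (rev [0..<d]))"
    by (cases d) (auto simp: lastv_def)
  moreover have "map (teval f e) (map Var (rev [0..<d])) = map e (rev [0..<d])" by simp
  ultimately show ?case by (simp del: map_eq_conv)
next
  case (Suc n)
  have m: "map (e(d := k)) (rev [0..<Suc d]) = k # map e (rev [0..<d])" for k by simp
  have m': "map (\<lambda>a. if a = d then k else e a) (rev [0..<d]) = map e (rev [0..<d])" for k by auto
  show ?case using Suc m' by (simp del: map_eq_conv)
qed

lemma fv_FQ: "freevars (FQ n b R d) \<subseteq> {..<d}"
proof (induction n arbitrary: b d)
  case 0 thus ?case by auto
next
  case (Suc n)
  thus ?case by (cases b) (auto; fastforce)+
qed

lemma cls_FQ: "isSigma n (FQ n True R d) \<and> isPi n (FQ n False R d)"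
  by (induction n arbitrary: d) auto

lemma QS_neg: "QS n (\<not> b) (\<lambda>xs s. \<not> R xs s) xs f = (\<not> QS n b R xs f)"
proof (induction n arbitrary: b xs)
  case (Suc n)
  have "QS n False (\<lambda>xs s. \<not> R xs s) ys f = (\<not> QS n True R ys f)"
       "QS n True (\<lambda>xs s. \<not> R xs s) ys f = (\<not> QS n False R ys f)" for ys
    using Suc.IH[of True] Suc.IH[of False] by simp_all
  thus ?case by auto
qed simp

lemma QS_app: "zs \<noteq> [] \<or> m > 0 \<Longrightarrow> QS m b R (zs @ ys) f = QS m b (\<lambda>xs. R (xs @ ys)) zs f"
proof (induction m arbitrary: b zs)
  case 0 thus ?case by (simp add: lastv_def)
next
  case (Suc m)
  have "QS m c R ((k # zs) @ ys) f = QS m c (\<lambda>xs. R (xs @ ys)) (k # zs) f" for c k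
    using Suc.IH by blast
  thus ?case by simp
qed

lemma A: "S \<in> bSigma (Suc n) \<longleftrightarrow> (\<exists>R. S = {f. QS (Suc n) True R [] f})"
proof (induction n arbitrary: S)
  case 0
  show ?case
  proof
    assume "S \<in> bSigma (Suc 0)"
    hence l: "loc S" by (simp add: open_loc)
    define R where "R = (\<lambda>(xs::nat list) s. \<forall>g. map g [0..<length s] = s \<longrightarrow> g \<in> S)"
    have "S = {f. QS (Suc 0) True R [] f}"
    proof (intro set_eqI iffI)
      fix f assume "f \<in> S"
      then obtain N where N: "\<forall>g. (\<forall>i<N. g i = f i) \<longrightarrow> g \<in> S" using l loc_def by blast
      have "R [N] (map f [0..<Suc N])"
        unfolding R_def
      proof (intro allI impI)
        fix g assume "map g [0..<length (map f [0..<Suc N])] = map f [0..<Suc N]"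
        hence "\<forall>i<N. g i = f i" by (simp add: map_eq_conv)
        thus "g \<in> S" using N by blast
      qed
      thus "f \<in> {f. QS (Suc 0) True R [] f}" by (auto simp: lastv_def)
    next
      fix f assume "f \<in> {f. QS (Suc 0) True R [] f}"
      then obtain k where "R [k] (map f [0..<Suc k])" by (auto simp: lastv_def)
      hence "\<forall>g. map g [0..<Suc k] = map f [0..<Suc k] \<longrightarrow> g \<in> S"
        unfolding R_def by (simp only: length_map length_upt diff_zero)
      thus "f \<in> S" by blast
    qed
    thus "\<exists>R. S = {f. QS (Suc 0) True R [] f}" by blast
  next
    assume "\<exists>R. S = {f. QS (Suc 0) True R [] f}"
    then obtain R where S: "S = {f. \<exists>k. R [k] (map f [0..<Suc k])}" by (auto simp: lastv_def)
    have "loc S" unfolding loc_def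
    proof
      fix f assume "f \<in> S"
      then obtain k where k: "R [k] (map f [0..<Suc k])" using S by auto
      show "\<exists>N. \<forall>g. (\<forall>i<N. g i = f i) \<longrightarrow> g \<in> S"
      proof (intro exI[of _ "Suc k"] allI impI)
        fix g assume "\<forall>i<Suc k. g i = f i"
        hence "map g [0..<Suc k] = map f [0..<Suc k]" by (simp add: map_eq_conv)
        thus "g \<in> S" using k S using S by (simp del: map_eq_conv upt_Suc) (metis)
      qed
    qed
    thus "S \<in> bSigma (Suc 0)" by (simp add: open_loc)
  qed
next
  case (Suc n)
  have P: "-T \<in> bSigma (Suc n) \<longleftrightarrow> (\<exists>R. T = {f. QS (Suc n) False R [] f})" for T
  proof
    assume "-T \<in> bSigma (Suc n)"
    then obtain R where "-T = {f. QS (Suc n) True R [] f}" using Suc by blast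
    hence "T = {f. QS (Suc n) (\<not> True) (\<lambda>xs s. \<not> R xs s) [] f}"
      unfolding QS_neg by (metis Collect_neg_eq double_complement)
    thus "\<exists>R. T = {f. QS (Suc n) False R [] f}" by auto
  next
    assume "\<exists>R. T = {f. QS (Suc n) False R [] f}"
    then obtain R where "T = {f. QS (Suc n) False R [] f}" by blast
    hence "-T = {f. QS (Suc n) (\<not> False) (\<lambda>xs s. \<not> R xs s) [] f}"
      unfolding QS_neg by auto
    thus "-T \<in> bSigma (Suc n)" using Suc by auto
  qed
  have unf: "QS (Suc (Suc n)) True R [] f = (\<exists>k. QS (Suc n) False (\<lambda>xs. R (xs @ [k])) [] f)" for R f
    using QS_app[of "[]" "Suc n" False R "[_]" f] by simp
  show ?case
  proof
    assume "S \<in> bSigma (Suc (Suc n))"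
    hence "\<exists>A. (\<forall>i::nat. - A i \<in> bSigma (Suc n)) \<and> S = (\<Union>i. A i)" by simp
    then obtain A where A: "\<forall>i::nat. - A i \<in> bSigma (Suc n)" "S = (\<Union>i. A i)" by blast
    hence "\<forall>i. \<exists>R. A i = {f. QS (Suc n) False R [] f}" using P by blast
    then obtain RR where RR: "\<And>i. A i = {f. QS (Suc n) False (RR i) [] f}" by metis
    define R where "R xs = RR (last xs) (butlast xs)" for xs :: "nat list"
    have "S = {f. QS (Suc (Suc n)) True R [] f}"
      unfolding unf R_def using A(2) RR by auto
    thus "\<exists>R. S = {f. QS (Suc (Suc n)) True R [] f}" by blast
  next
    assume "\<exists>R. S = {f. QS (Suc (Suc n)) True R [] f}"
    then obtain R where S: "S = {f. QS (Suc (Suc n)) True R [] f}" by blast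
    define A where "A k = {f. QS (Suc n) False (\<lambda>xs. R (xs @ [k])) [] f}" for k
    have "\<forall>i. - A i \<in> bSigma (Suc n)" using P A_def by blast
    moreover have "S = (\<Union>i. A i)" using S unf A_def by auto
    ultimately show "S \<in> bSigma (Suc (Suc n))" by auto
  qed
qed

lemma APi: "S \<in> bPi (Suc n) \<longleftrightarrow> (\<exists>R. S = {f. QS (Suc n) False R [] f})"
proof
  assume "S \<in> bPi (Suc n)"
  then obtain R where "-S = {f. QS (Suc n) True R [] f}" using A bPi_def by blast
  hence "S = {f. QS (Suc n) (\<not> True) (\<lambda>xs s. \<not> R xs s) [] f}"
    unfolding QS_neg by (metis Collect_neg_eq double_complement)
  thus "\<exists>R. S = {f. QS (Suc n) False R [] f}" by auto
next
  assume "\<exists>R. S = {f. QS (Suc n) False R [] f}"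
  then obtain R where "S = {f. QS (Suc n) False R [] f}" by blast
  hence "-S = {f. QS (Suc n) (\<not> False) (\<lambda>xs s. \<not> R xs s) [] f}"
    unfolding QS_neg by auto
  thus "S \<in> bPi (Suc n)" using A bPi_def by auto
qed



lemma FQ_sentence: "sentence (FQ n b R 0)"
  using fv_FQ[of n b R 0] by (auto simp: sentence_def)

lemma FQ_models: "models f (FQ n b R 0) = QS n b R [] f"
  by (simp add: models_def sat_FQ)

lemma mainSuc:
  fixes S :: "(nat \<Rightarrow> nat) set" and m :: nat
  shows "(S \<in> bSigma (Suc m) \<longleftrightarrow> (\<exists>\<phi>. sentence \<phi> \<and> isSigma (Suc m) \<phi> \<and> S = {f. models f \<phi>}))
       \<and> (S \<in> bPi (Suc m) \<longleftrightarrow> (\<exists>\<phi>. sentence \<phi> \<and> isPi (Suc m) \<phi> \<and> S = {f. models f \<phi>}))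
       \<and> (S \<in> bDelta (Suc m) \<longleftrightarrow> (\<exists>\<phi>. sentence \<phi> \<and> isDelta (Suc m) \<phi> \<and> S = {f. models f \<phi>}))"
proof -
  have sig: "S \<in> bSigma (Suc m) \<longleftrightarrow> (\<exists>\<phi>. sentence \<phi> \<and> isSigma (Suc m) \<phi> \<and> S = {f. models f \<phi>})"
  proof
    assume "S \<in> bSigma (Suc m)"
    then obtain R where "S = {f. QS (Suc m) True R [] f}" using A by blast
    hence "S = {f. models f (FQ (Suc m) True R 0)}" by (simp only: FQ_models)
    moreover have "isSigma (Suc m) (FQ (Suc m) True R 0)" using cls_FQ by blast
    ultimately show "\<exists>\<phi>. sentence \<phi> \<and> isSigma (Suc m) \<phi> \<and> S = {f. models f \<phi>}"
      using FQ_sentence by blast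
  next
    assume "\<exists>\<phi>. sentence \<phi> \<and> isSigma (Suc m) \<phi> \<and> S = {f. models f \<phi>}"
    then obtain \<phi> where p: "sentence \<phi>" "isSigma (Suc m) \<phi>" "S = {f. models f \<phi>}" by blast
    hence "S = {f. sat f (\<lambda>_. 0) \<phi>}" using models_sentence[OF p(1)] by simp
    moreover have "{f. sat f (\<lambda>_. 0) \<phi>} \<in> bSigma (Suc m)" using B[of m \<phi> "\<lambda>_. 0"] p by blast
    ultimately show "S \<in> bSigma (Suc m)" by simp
  qed
  have pi: "S \<in> bPi (Suc m) \<longleftrightarrow> (\<exists>\<phi>. sentence \<phi> \<and> isPi (Suc m) \<phi> \<and> S = {f. models f \<phi>})"
  proof
    assume "S \<in> bPi (Suc m)"
    then obtain R where "S = {f. QS (Suc m) False R [] f}" using APi by blast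
    hence "S = {f. models f (FQ (Suc m) False R 0)}" by (simp only: FQ_models)
    moreover have "isPi (Suc m) (FQ (Suc m) False R 0)" using cls_FQ by blast
    ultimately show "\<exists>\<phi>. sentence \<phi> \<and> isPi (Suc m) \<phi> \<and> S = {f. models f \<phi>}"
      using FQ_sentence by blast
  next
    assume "\<exists>\<phi>. sentence \<phi> \<and> isPi (Suc m) \<phi> \<and> S = {f. models f \<phi>}"
    then obtain \<phi> where p: "sentence \<phi>" "isPi (Suc m) \<phi>" "S = {f. models f \<phi>}" by blast
    hence "S = {f. sat f (\<lambda>_. 0) \<phi>}" using models_sentence[OF p(1)] by simp
    moreover have "- {f. sat f (\<lambda>_. 0) \<phi>} \<in> bSigma (Suc m)" using B[of m \<phi> "\<lambda>_. 0"] p by blast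
    ultimately show "S \<in> bPi (Suc m)" by (simp add: bPi_def)
  qed
  have del: "S \<in> bDelta (Suc m) \<longleftrightarrow> (\<exists>\<phi>. sentence \<phi> \<and> isDelta (Suc m) \<phi> \<and> S = {f. models f \<phi>})"
  proof
    assume "S \<in> bDelta (Suc m)"
    hence d: "S \<in> bSigma (Suc m)" "S \<in> bPi (Suc m)" unfolding bDelta_def by simp_all
    obtain R1 where R1: "S = {f. QS (Suc m) True R1 [] f}" using A[of S m] d(1) by blast
    obtain R2 where R2: "S = {f. QS (Suc m) False R2 [] f}" using APi[of S m] d(2) by blast
    have "QS (Suc m) True R1 [] f = QS (Suc m) False R2 [] f" for f
      using R1 R2 by (metis mem_Collect_eq)
    hence "equivalent (FQ (Suc m) True R1 0) (FQ (Suc m) False R2 0)"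
      unfolding equivalent_def sat_FQ by simp
    moreover have "equivalent (FQ (Suc m) True R1 0) (FQ (Suc m) True R1 0)" by (simp add: equivalent_def)
    moreover have "isSigma (Suc m) (FQ (Suc m) True R1 0)" "isPi (Suc m) (FQ (Suc m) False R2 0)" using cls_FQ by blast+
    ultimately have "isDelta (Suc m) (FQ (Suc m) True R1 0)" unfolding isDelta.simps by blast
    moreover have "S = {f. models f (FQ (Suc m) True R1 0)}" using R1 by (simp only: FQ_models)
    ultimately show "\<exists>\<phi>. sentence \<phi> \<and> isDelta (Suc m) \<phi> \<and> S = {f. models f \<phi>}"
      using FQ_sentence by blast
  next
    assume "\<exists>\<phi>. sentence \<phi> \<and> isDelta (Suc m) \<phi> \<and> S = {f. models f \<phi>}"
    then obtain \<phi> where p: "sentence \<phi>" "isDelta (Suc m) \<phi>" "S = {f. models f \<phi>}" by blast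
    hence S: "S = {f. sat f (\<lambda>_. 0) \<phi>}" using models_sentence[OF p(1)] by simp
    obtain \<psi>1 \<psi>2 where q: "isSigma (Suc m) \<psi>1" "equivalent \<phi> \<psi>1" "isPi (Suc m) \<psi>2" "equivalent \<phi> \<psi>2"
      using p(2) unfolding isDelta.simps by blast
    have "sat f (\<lambda>_. 0) \<phi> = sat f (\<lambda>_. 0) \<psi>1" "sat f (\<lambda>_. 0) \<phi> = sat f (\<lambda>_. 0) \<psi>2" for f
      using q unfolding equivalent_def by blast+
    hence "S = {f. sat f (\<lambda>_. 0) \<psi>1}" "S = {f. sat f (\<lambda>_. 0) \<psi>2}"
      using S by auto
    moreover have "{f. sat f (\<lambda>_. 0) \<psi>1} \<in> bSigma (Suc m)" using B[of m \<psi>1 "\<lambda>_. 0"] q by blast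
    moreover have "- {f. sat f (\<lambda>_. 0) \<psi>2} \<in> bSigma (Suc m)" using B[of m \<psi>2 "\<lambda>_. 0"] q by blast
    ultimately show "S \<in> bDelta (Suc m)" by (simp add: bDelta_def bPi_def)
  qed
  show ?thesis using sig pi del by blast
qed
theorem mainTheorem9:
  fixes S :: "(nat \<Rightarrow> nat) set" and n :: nat
  assumes "n > 0"
  shows "(S \<in> bSigma n \<longleftrightarrow> (\<exists>\<phi>. sentence \<phi> \<and> isSigma n \<phi> \<and> S = {f. models f \<phi>}))
       \<and> (S \<in> bPi n \<longleftrightarrow> (\<exists>\<phi>. sentence \<phi> \<and> isPi n \<phi> \<and> S = {f. models f \<phi>}))
       \<and> (S \<in> bDelta n \<longleftrightarrow> (\<exists>\<phi>. sentence \<phi> \<and> isDelta n \<phi> \<and> S = {f. models f \<phi>}))"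
proof -
  obtain m where nm: "n = Suc m" using assms gr0_implies_Suc by blast
  show ?thesis unfolding nm by (rule mainSuc)
qed

end
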